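(* For every tree $T$, $\mathrm{opt}(T)=\mathsf{vc}(T)$; moreover, the simple protocol in which exactly the vertices of a minimum vertex cover of $T$ broadcast their entire input solves the multiparty equality problem and is optimal.
   Context: Multiparty equality in the local broadcast model: $G$ is a connected graph and $k$ a positive integer; every vertex $v$ receives an input $\lambda(v)\in\{0,1\}^k$. Vertices communicate by broadcasting messages; a message broadcast by a vertex is received by all of its neighbours, and its number of bits is counted once. Protocols are deterministic and static: which vertices send messages and the message lengths depend only on $G$ and $k$, while message contents may depend on inputs. At the end every vertex accepts or rejects; the protocol solves the problem if all vertices accept when all inputs are equal and at least one vertex rejects when two inputs differ. Total cost = sum over vertices of the number of bits broadcast; $\mathrm{opt}(G,k)$ is the minimum total cost of a solving protocol and $\mathrm{opt}(G)=\lim_{k\to\infty}\mathrm{opt}(G,k)/k$. A simple protocol is one in which each vertex of a fixed set $S$ broadcasts its whole input and all other vertices are silent, and each vertex accepts iff every input it received equals its own input; its per-bit cost is $|S|$. $\mathsf{vc}(T)$ is the minimum size of a vertex cover of $T$. *)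

theory Defs
  imports Complex_Main
begin

definition is_graph :: "'a set \<Rightarrow> ('a \<Rightarrow> 'a \<Rightarrow> bool) \<Rightarrow> bool" where
  "is_graph V E \<longleftrightarrow> finite V \<and> (\<forall>u v. E u v \<longrightarrow> u \<in> V \<and> v \<in> V)
     \<and> (\<forall>u v. E u v \<longrightarrow> E v u) \<and> (\<forall>u. \<not> E u u)"

definition connected_graph :: "'a set \<Rightarrow> ('a \<Rightarrow> 'a \<Rightarrow> bool) \<Rightarrow> bool" where
  "connected_graph V E \<longleftrightarrow> is_graph V E \<and> V \<noteq> {} \<and> (\<forall>u\<in>V. \<forall>v\<in>V. E\<^sup>*\<^sup>* u v)"

definition is_cycle :: "('a \<Rightarrow> 'a \<Rightarrow> bool) \<Rightarrow> 'a list \<Rightarrow> bool" where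
  "is_cycle E cs \<longleftrightarrow> length cs \<ge> 3 \<and> distinct cs
     \<and> (\<forall>i. Suc i < length cs \<longrightarrow> E (cs ! i) (cs ! Suc i))
     \<and> E (last cs) (hd cs)"

definition is_tree :: "'a set \<Rightarrow> ('a \<Rightarrow> 'a \<Rightarrow> bool) \<Rightarrow> bool" where
  "is_tree V E \<longleftrightarrow> connected_graph V E \<and> (\<nexists>cs. is_cycle E cs)"

definition vertex_cover :: "'a set \<Rightarrow> ('a \<Rightarrow> 'a \<Rightarrow> bool) \<Rightarrow> 'a set \<Rightarrow> bool" where
  "vertex_cover V E S \<longleftrightarrow> S \<subseteq> V \<and> (\<forall>u v. E u v \<longrightarrow> u \<in> S \<or> v \<in> S)"

definition vc :: "'a set \<Rightarrow> ('a \<Rightarrow> 'a \<Rightarrow> bool) \<Rightarrow> nat" where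
  "vc V E = (LEAST n. \<exists>S. vertex_cover V E S \<and> card S = n)"

definition min_vertex_cover :: "'a set \<Rightarrow> ('a \<Rightarrow> 'a \<Rightarrow> bool) \<Rightarrow> 'a set \<Rightarrow> bool" where
  "min_vertex_cover V E S \<longleftrightarrow> vertex_cover V E S \<and> card S = vc V E"

text \<open>A static protocol consists of
  \<^item> a schedule: a list of broadcasts (sender, message length), fixed in advance
    (it depends only on the graph and k);
  \<^item> message functions: the message of step j is computed by its sender from its own input
    and its current view (the messages of all earlier steps, where a message is visible,
    \<open>Some m\<close>, iff it was broadcast by the vertex itself or by a neighbour, and \<open>None\<close> otherwise);
  \<^item> decision functions: at the end, vertex v accepts depending on its input and final view.\<close>
type_synonym 'a protocol =
  "('a \<times> nat) list \<times> (nat \<Rightarrow> bool list \<Rightarrow> bool list option list \<Rightarrow> bool list)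
     \<times> ('a \<Rightarrow> bool list \<Rightarrow> bool list option list \<Rightarrow> bool)"

definition sched :: "'a protocol \<Rightarrow> ('a \<times> nat) list" where "sched P = fst P"
definition msgf :: "'a protocol \<Rightarrow> nat \<Rightarrow> bool list \<Rightarrow> bool list option list \<Rightarrow> bool list"
  where "msgf P = fst (snd P)"
definition decf :: "'a protocol \<Rightarrow> 'a \<Rightarrow> bool list \<Rightarrow> bool list option list \<Rightarrow> bool"
  where "decf P = snd (snd P)"

definition view :: "('a \<Rightarrow> 'a \<Rightarrow> bool) \<Rightarrow> 'a protocol \<Rightarrow> 'a \<Rightarrow> bool list list \<Rightarrow> bool list option list" where
  "view E P v ms = map (\<lambda>i. if fst (sched P ! i) = v \<or> E (fst (sched P ! i)) v
                            then Some (ms ! i) else None) [0..<length ms]"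

fun transcript :: "('a \<Rightarrow> 'a \<Rightarrow> bool) \<Rightarrow> 'a protocol \<Rightarrow> ('a \<Rightarrow> bool list) \<Rightarrow> nat \<Rightarrow> bool list list" where
  "transcript E P x 0 = []"
| "transcript E P x (Suc j) =
     (let ms = transcript E P x j; v = fst (sched P ! j)
      in ms @ [msgf P j (x v) (view E P v ms)])"

definition accepts :: "('a \<Rightarrow> 'a \<Rightarrow> bool) \<Rightarrow> 'a protocol \<Rightarrow> ('a \<Rightarrow> bool list) \<Rightarrow> 'a \<Rightarrow> bool" where
  "accepts E P x v = decf P v (x v) (view E P v (transcript E P x (length (sched P))))"

definition wf_protocol :: "'a set \<Rightarrow> nat \<Rightarrow> 'a protocol \<Rightarrow> bool" where
  "wf_protocol V k P \<longleftrightarrow> (\<forall>j < length (sched P). fst (sched P ! j) \<in> V \<and>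
       (\<forall>a w. length a = k \<longrightarrow> length (msgf P j a w) = snd (sched P ! j)))"

definition solves :: "'a set \<Rightarrow> ('a \<Rightarrow> 'a \<Rightarrow> bool) \<Rightarrow> nat \<Rightarrow> 'a protocol \<Rightarrow> bool" where
  "solves V E k P \<longleftrightarrow> wf_protocol V k P \<and>
     (\<forall>x. (\<forall>v\<in>V. length (x v) = k) \<longrightarrow>
        ((\<forall>u\<in>V. \<forall>v\<in>V. x u = x v) \<longrightarrow> (\<forall>v\<in>V. accepts E P x v)) \<and>
        ((\<exists>u\<in>V. \<exists>v\<in>V. x u \<noteq> x v) \<longrightarrow> (\<exists>v\<in>V. \<not> accepts E P x v)))"

definition cost :: "'a protocol \<Rightarrow> nat" where
  "cost P = sum_list (map snd (sched P))"

definition opt :: "'a set \<Rightarrow> ('a \<Rightarrow> 'a \<Rightarrow> bool) \<Rightarrow> nat \<Rightarrow> nat" where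
  "opt V E k = (LEAST c. \<exists>P. solves V E k P \<and> cost P = c)"

definition simple_protocol :: "'a list \<Rightarrow> nat \<Rightarrow> 'a protocol" where
  "simple_protocol vs k =
     (map (\<lambda>v. (v, k)) vs, (\<lambda>j a w. a), (\<lambda>v a w. \<forall>m\<in>set w. m = None \<or> m = Some a))"

end

theory Submission
  imports Defs "HOL-Library.Transitive_Closure_Table"
begin

lemma simple_sched: "sched (simple_protocol vs k) = map (\<lambda>v. (v, k)) vs"
  by (simp add: sched_def simple_protocol_def)
lemma simple_msgf: "msgf (simple_protocol vs k) = (\<lambda>j a w. a)"
  by (simp add: msgf_def simple_protocol_def)
lemma simple_decf: "decf (simple_protocol vs k) = (\<lambda>v a w. \<forall>m\<in>set w. m = None \<or> m = Some a)"
  by (simp add: decf_def simple_protocol_def)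

lemma transcript_length: "length (transcript E P x j) = j"
  by (induction j) (simp_all add: Let_def)

lemma simple_transcript:
  "j \<le> length vs \<Longrightarrow> transcript E (simple_protocol vs k) x j = map (\<lambda>i. x (vs ! i)) [0..<j]"
  by (induction j) (simp_all add: Let_def simple_sched simple_msgf)

lemma simple_accepts:
  "accepts E (simple_protocol vs k) x w \<longleftrightarrow>
     (\<forall>i<length vs. (vs ! i = w \<or> E (vs ! i) w) \<longrightarrow> x (vs ! i) = x w)"
  by (auto simp: accepts_def simple_decf view_def simple_transcript simple_sched transcript_length)

lemma simple_cost: "cost (simple_protocol vs k) = length vs * k"
  by (induction vs) (simp_all add: cost_def simple_sched)

lemma simple_solves:
  fixes V :: "'a set"
  assumes "connected_graph V E" "vertex_cover V E (set vs)"
  shows "solves V E k (simple_protocol vs k)"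
proof -
  have sub: "set vs \<subseteq> V" using assms(2) by (simp add: vertex_cover_def)
  have wf: "wf_protocol V k (simple_protocol vs k)"
    using sub by (auto simp: wf_protocol_def simple_sched simple_msgf)
  show ?thesis unfolding solves_def
  proof (intro conjI allI impI wf)
    fix x :: "'a \<Rightarrow> bool list" assume len: "\<forall>v\<in>V. length (x v) = k"
    show A: "\<forall>v\<in>V. accepts E (simple_protocol vs k) x v" if "\<forall>u\<in>V. \<forall>v\<in>V. x u = x v"
    proof (intro ballI)
      fix v assume v: "v \<in> V"
      show "accepts E (simple_protocol vs k) x v"
        unfolding simple_accepts
      proof (intro allI impI)
        fix i assume "i < length vs"
        hence "vs ! i \<in> V" using sub nth_mem by blast
        thus "x (vs ! i) = x v" using that v by blast
      qed
    qed
    show B: "\<exists>v\<in>V. \<not> accepts E (simple_protocol vs k) x v" if "\<exists>u\<in>V. \<exists>v\<in>V. x u \<noteq> x v"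
    proof -
      have "\<exists>c d. E c d \<and> x c \<noteq> x d"
      proof (rule ccontr)
        assume "\<not> ?thesis"
        hence eq: "E c d \<Longrightarrow> x c = x d" for c d by blast
        from that obtain a b where ab: "a\<in>V" "b\<in>V" "x a \<noteq> x b" by blast
        have "E\<^sup>*\<^sup>* a b" using assms(1) ab by (auto simp: connected_graph_def)
        hence "x a = x b" by (induction rule: rtranclp_induct) (auto dest: eq)
        with ab show False by simp
      qed
      then obtain c d where cd: "E c d" "x c \<noteq> x d" by blast
      have g: "is_graph V E" using assms(1) by (simp add: connected_graph_def)
      hence cdV: "c \<in> V" "d \<in> V" "E d c" using cd by (auto simp: is_graph_def)
      from assms(2) cd have "c \<in> set vs \<or> d \<in> set vs" by (auto simp: vertex_cover_def)
      thus ?thesis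
      proof
        assume "c \<in> set vs"
        then obtain i where "i < length vs" "vs ! i = c" by (auto simp: in_set_conv_nth)
        hence "\<not> accepts E (simple_protocol vs k) x d" using cd by (auto simp: simple_accepts)
        thus ?thesis using cdV by blast
      next
        assume "d \<in> set vs"
        then obtain i where "i < length vs" "vs ! i = d" by (auto simp: in_set_conv_nth)
        hence "\<not> accepts E (simple_protocol vs k) x c" using cd cdV by (auto simp: simple_accepts)
        thus ?thesis using cdV by blast
      qed
    qed
  qed
qed

lemma transcript_prefix: "i < j \<Longrightarrow> j \<le> m \<Longrightarrow> transcript E P x m ! i = transcript E P x j ! i"
proof (induction m)
  case 0 thus ?case by simp
next
  case (Suc m)
  show ?case
  proof (cases "j = Suc m")
    case True thus ?thesis by simp
  next
    case False
    hence jm: "j \<le> m" using Suc by simp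
    have "transcript E P x (Suc m) ! i = transcript E P x m ! i"
      using Suc.prems jm by (simp add: Let_def nth_append transcript_length)
    thus ?thesis using Suc.IH Suc.prems jm by simp
  qed
qed

lemma transcript_nth: "i < n \<Longrightarrow> transcript E P x n ! i =
   msgf P i (x (fst (sched P ! i))) (view E P (fst (sched P ! i)) (transcript E P x i))"
  using transcript_prefix[of i "Suc i" n E P x] by (simp add: Let_def nth_append transcript_length)

lemma view_cong:
  assumes "length ms1 = length ms2"
    "\<And>i. i < length ms1 \<Longrightarrow> fst (sched P ! i) = s \<or> E (fst (sched P ! i)) s \<Longrightarrow> ms1 ! i = ms2 ! i"
  shows "view E P s ms1 = view E P s ms2"
  using assms by (auto simp: view_def)

lemma card_len_profile:
  "card {ms :: bool list list. length ms = length ls \<and> (\<forall>t<length ls. length (ms ! t) = ls ! t)} = 2 ^ sum_list ls"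
proof (induction ls)
  case Nil
  have "{ms :: bool list list. length ms = length [] \<and> (\<forall>t<length ([]::nat list). length (ms ! t) = [] ! t)} = {[]}"
    by auto
  thus ?case by simp
next
  case (Cons l ls)
  let ?S = "{ms :: bool list list. length ms = length ls \<and> (\<forall>t<length ls. length (ms ! t) = ls ! t)}"
  let ?B = "{a :: bool list. length a = l}"
  have cB: "card ?B = 2 ^ l" using card_lists_length_eq[of "UNIV :: bool set" l] by simp
  have fB: "finite ?B" by (rule card_ge_0_finite) (simp add: cB)
  have fS: "finite ?S" by (rule card_ge_0_finite) (simp add: Cons.IH)
  have eq: "{ms :: bool list list. length ms = length (l # ls) \<and> (\<forall>t<length (l # ls). length (ms ! t) = (l # ls) ! t)}
     = (\<lambda>(a, ms). a # ms) ` (?B \<times> ?S)"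
  proof (rule set_eqI, rule iffI)
    fix ms assume "ms \<in> {ms :: bool list list. length ms = length (l # ls) \<and> (\<forall>t<length (l # ls). length (ms ! t) = (l # ls) ! t)}"
    then obtain a ms' where ms: "ms = a # ms'" "length ms' = length ls" "\<forall>t<Suc (length ls). length (ms ! t) = (l # ls) ! t"
      by (cases ms) auto
    have "length a = l" using ms(3)[rule_format, of 0] ms(1) by simp
    moreover have "\<forall>t<length ls. length (ms' ! t) = ls ! t"
      using ms by (metis Suc_mono nth_Cons_Suc)
    ultimately show "ms \<in> (\<lambda>(a, ms). a # ms) ` (?B \<times> ?S)" using ms by force
  next
    fix ms assume "ms \<in> (\<lambda>(a, ms). a # ms) ` (?B \<times> ?S)"
    thus "ms \<in> {ms :: bool list list. length ms = length (l # ls) \<and> (\<forall>t<length (l # ls). length (ms ! t) = (l # ls) ! t)}"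
      by (auto simp: nth_Cons split: nat.splits)
  qed
  have "inj_on (\<lambda>(a, ms). a # ms) (?B \<times> ?S)" by (auto simp: inj_on_def)
  hence "card ((\<lambda>(a, ms). a # ms) ` (?B \<times> ?S)) = card ?B * card ?S"
    by (simp add: card_image card_cartesian_product)
  thus ?case using eq cB Cons.IH by (simp add: power_add)
qed


lemma mix_transcript:
  assumes n: "n = length (sched P)"
  and z: "\<And>w. z w = (if w \<in> A then x w else y w)"
  and c1: "\<And>w i. w \<in> A \<Longrightarrow> i < n \<Longrightarrow> fst (sched P ! i) \<notin> A \<Longrightarrow>
      fst (sched P ! i) = w \<or> E (fst (sched P ! i)) w \<Longrightarrow> transcript E P x n ! i = transcript E P y n ! i"
  and c2: "\<And>w i. w \<notin> A \<Longrightarrow> i < n \<Longrightarrow> fst (sched P ! i) \<in> A \<Longrightarrow>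
      fst (sched P ! i) = w \<or> E (fst (sched P ! i)) w \<Longrightarrow> transcript E P x n ! i = transcript E P y n ! i"
  shows "i < n \<Longrightarrow> transcript E P z n ! i =
     (if fst (sched P ! i) \<in> A then transcript E P x n ! i else transcript E P y n ! i)"
proof (induction i rule: less_induct)
  case (less i)
  let ?w = "fst (sched P ! i)"
  have pre: "\<And>q i'. i' < i \<Longrightarrow> transcript E P q i ! i' = transcript E P q n ! i'"
    using transcript_prefix less.prems by (metis less_imp_le_nat)
  show ?case
  proof (cases "?w \<in> A")
    case True
    have "view E P ?w (transcript E P z i) = view E P ?w (transcript E P x i)"
    proof (rule view_cong)
      show "length (transcript E P z i) = length (transcript E P x i)" by (simp add: transcript_length)
      fix i' assume i': "i' < length (transcript E P z i)" "fst (sched P ! i') = ?w \<or> E (fst (sched P ! i')) ?w"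
      hence ii: "i' < i" by (simp add: transcript_length)
      have "transcript E P z i ! i' = transcript E P z n ! i'" using pre ii by simp
      also have "\<dots> = (if fst (sched P ! i') \<in> A then transcript E P x n ! i' else transcript E P y n ! i')"
        using less.IH ii less.prems by simp
      also have "\<dots> = transcript E P x n ! i'"
        using c1[OF True _ _ i'(2)] ii less.prems by auto
      also have "\<dots> = transcript E P x i ! i'" using pre ii by simp
      finally show "transcript E P z i ! i' = transcript E P x i ! i'" .
    qed
    moreover have "z ?w = x ?w" using z True by simp
    ultimately show ?thesis using True less.prems by (simp add: transcript_nth)
  next
    case False
    have "view E P ?w (transcript E P z i) = view E P ?w (transcript E P y i)"
    proof (rule view_cong)
      show "length (transcript E P z i) = length (transcript E P y i)" by (simp add: transcript_length)
      fix i' assume i': "i' < length (transcript E P z i)" "fst (sched P ! i') = ?w \<or> E (fst (sched P ! i')) ?w"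
      hence ii: "i' < i" by (simp add: transcript_length)
      have "transcript E P z i ! i' = transcript E P z n ! i'" using pre ii by simp
      also have "\<dots> = (if fst (sched P ! i') \<in> A then transcript E P x n ! i' else transcript E P y n ! i')"
        using less.IH ii less.prems by simp
      also have "\<dots> = transcript E P y n ! i'"
        using c2[OF False _ _ i'(2)] ii less.prems by auto
      also have "\<dots> = transcript E P y i ! i'" using pre ii by simp
      finally show "transcript E P z i ! i' = transcript E P y i ! i'" .
    qed
    moreover have "z ?w = y ?w" using z False by simp
    ultimately show ?thesis using False less.prems by (simp add: transcript_nth)
  qed
qed

lemma mix_view:
  assumes n: "n = length (sched P)"
  and z: "\<And>w. z w = (if w \<in> A then x w else y w)"
  and c1: "\<And>w i. w \<in> A \<Longrightarrow> i < n \<Longrightarrow> fst (sched P ! i) \<notin> A \<Longrightarrow>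
      fst (sched P ! i) = w \<or> E (fst (sched P ! i)) w \<Longrightarrow> transcript E P x n ! i = transcript E P y n ! i"
  and c2: "\<And>w i. w \<notin> A \<Longrightarrow> i < n \<Longrightarrow> fst (sched P ! i) \<in> A \<Longrightarrow>
      fst (sched P ! i) = w \<or> E (fst (sched P ! i)) w \<Longrightarrow> transcript E P x n ! i = transcript E P y n ! i"
  shows "view E P w (transcript E P z n) =
     (if w \<in> A then view E P w (transcript E P x n) else view E P w (transcript E P y n))"
proof (cases "w \<in> A")
  case True
  have "view E P w (transcript E P z n) = view E P w (transcript E P x n)"
  proof (rule view_cong)
    show "length (transcript E P z n) = length (transcript E P x n)" by (simp add: transcript_length)
    fix i' assume i': "i' < length (transcript E P z n)" "fst (sched P ! i') = w \<or> E (fst (sched P ! i')) w"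
    hence ii: "i' < n" by (simp add: transcript_length)
    show "transcript E P z n ! i' = transcript E P x n ! i'"
      using mix_transcript[OF n z c1 c2 ii] c1[OF True ii _ i'(2)] by auto
  qed
  thus ?thesis using True by simp
next
  case False
  have "view E P w (transcript E P z n) = view E P w (transcript E P y n)"
  proof (rule view_cong)
    show "length (transcript E P z n) = length (transcript E P y n)" by (simp add: transcript_length)
    fix i' assume i': "i' < length (transcript E P z n)" "fst (sched P ! i') = w \<or> E (fst (sched P ! i')) w"
    hence ii: "i' < n" by (simp add: transcript_length)
    show "transcript E P z n ! i' = transcript E P y n ! i'"
      using mix_transcript[OF n z c1 c2 ii] c2[OF False ii _ i'(2)] by auto
  qed
  thus ?thesis using False by simp
qed


definition bits :: "'a protocol \<Rightarrow> 'a \<Rightarrow> nat" where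
  "bits P w = (\<Sum>i\<in>{i. i < length (sched P) \<and> fst (sched P ! i) = w}. snd (sched P ! i))"

lemma msg_length:
  assumes "wf_protocol V k P" "i < length (sched P)" "length (x (fst (sched P ! i))) = k"
  shows "length (transcript E P x (length (sched P)) ! i) = snd (sched P ! i)"
  using assms by (simp add: transcript_nth wf_protocol_def)

lemma edge_bound:
  assumes tree: "is_tree V E" and uv: "E u v" and sol: "solves V E k P"
  shows "k \<le> bits P u + bits P v"
proof -
  define n where "n = length (sched P)"
  have g: "is_graph V E" and nocyc: "\<And>cs. \<not> is_cycle E cs"
    using tree by (auto simp: is_tree_def connected_graph_def)
  have Esym: "E a c \<Longrightarrow> E c a" for a c using g by (auto simp: is_graph_def)
  have EV: "E a c \<Longrightarrow> a \<in> V \<and> c \<in> V" for a c using g by (auto simp: is_graph_def)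
  have uv_ne: "u \<noteq> v" using g uv by (auto simp: is_graph_def)
  have wf: "wf_protocol V k P" using sol by (simp add: solves_def)
  define E' where "E' = (\<lambda>a c. E a c \<and> \<not> ((a = u \<and> c = v) \<or> (a = v \<and> c = u)))"
  define A where "A = {w. E'\<^sup>*\<^sup>* u w}"
  have uA: "u \<in> A" by (simp add: A_def)
  have vA: "v \<notin> A"
  proof
    assume "v \<in> A"
    hence "E'\<^sup>*\<^sup>* u v" by (simp add: A_def)
    then obtain xs where "rtrancl_path E' u xs v" by (auto simp: rtranclp_eq_rtrancl_path)
    then obtain ys where p: "rtrancl_path E' u ys v" "distinct (u # ys)" by (rule rtrancl_path_distinct)
    have ne: "ys \<noteq> []" using p(1) uv_ne by (auto elim: rtrancl_path.cases)
    have last: "last ys = v" using rtrancl_path_last[OF p(1) ne] .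
    have step: "\<And>i. i < length ys \<Longrightarrow> E' ((u # ys) ! i) (ys ! i)" using rtrancl_path_nth[OF p(1)] by blast
    have l1: "length ys \<noteq> 1"
    proof
      assume "length ys = 1"
      then have "ys = [v]" using last by (cases ys) auto
      then show False using step[of 0] by (simp add: E'_def)
    qed
    have l0: "length ys \<noteq> 0" using ne by simp
    have "length (u # ys) = Suc (length ys)" by simp
    with l0 l1 have len: "length (u # ys) \<ge> 3" by linarith
    have "is_cycle E (u # ys)"
      unfolding is_cycle_def
    proof (intro conjI allI impI)
      show "3 \<le> length (u # ys)" by fact
      show "distinct (u # ys)" by fact
      fix i assume "Suc i < length (u # ys)"
      thus "E ((u # ys) ! i) ((u # ys) ! Suc i)" using step[of i] by (simp add: E'_def)
    next
      show "E (last (u # ys)) (hd (u # ys))" using last ne uv Esym by simp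
    qed
    thus False using nocyc by blast
  qed
  have cross: "a = u \<and> c = v" if a: "a \<in> A" "c \<notin> A" "E a c" for a c
  proof (rule ccontr)
    assume "\<not> (a = u \<and> c = v)"
    moreover have "\<not> (a = v \<and> c = u)" using a vA uA by auto
    ultimately have "E' a c" using a by (auto simp: E'_def)
    hence "c \<in> A" using a(1) by (auto simp: A_def intro: rtranclp.rtrancl_into_rtrancl)
    thus False using a by simp
  qed
  define idx where "idx = filter (\<lambda>i. fst (sched P ! i) = u \<or> fst (sched P ! i) = v) [0..<n]"
  define cut where "cut x = map (\<lambda>i. transcript E P (\<lambda>_. x) n ! i) idx" for x :: "bool list"
  define ls where "ls = map (\<lambda>i. snd (sched P ! i)) idx"
  define L where "L = {ms :: bool list list. length ms = length ls \<and> (\<forall>t<length ls. length (ms ! t) = ls ! t)}"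
  have inj: "inj_on cut {x. length x = k}"
  proof (rule inj_onI)
    fix x0 y0 :: "bool list" assume x0: "x0 \<in> {x. length x = k}" and y0: "y0 \<in> {x. length x = k}"
      and c: "cut x0 = cut y0"
    show "x0 = y0"
    proof (rule ccontr)
      assume xy: "x0 \<noteq> y0"
      have ceq: "transcript E P (\<lambda>_. x0) n ! i = transcript E P (\<lambda>_. y0) n ! i"
        if "i < n" "fst (sched P ! i) = u \<or> fst (sched P ! i) = v" for i
      proof -
        have "i \<in> set idx" using that by (simp add: idx_def)
        thus ?thesis using c by (simp add: cut_def)
      qed
      define z where "z = (\<lambda>w. if w \<in> A then x0 else y0)"
      have z: "z w = (if w \<in> A then (\<lambda>_. x0) w else (\<lambda>_. y0) w)" for w by (simp add: z_def)
      have c1: "transcript E P (\<lambda>_. x0) n ! i = transcript E P (\<lambda>_. y0) n ! i"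
        if "w \<in> A" "i < n" "fst (sched P ! i) \<notin> A" "fst (sched P ! i) = w \<or> E (fst (sched P ! i)) w" for w i
      proof -
        have "E w (fst (sched P ! i))" using that Esym by auto
        hence "fst (sched P ! i) = v" using cross that by blast
        thus ?thesis using ceq that by blast
      qed
      have c2: "transcript E P (\<lambda>_. x0) n ! i = transcript E P (\<lambda>_. y0) n ! i"
        if "w \<notin> A" "i < n" "fst (sched P ! i) \<in> A" "fst (sched P ! i) = w \<or> E (fst (sched P ! i)) w" for w i
      proof -
        have "E (fst (sched P ! i)) w" using that by auto
        hence "fst (sched P ! i) = u" using cross that by blast
        thus ?thesis using ceq that by blast
      qed
      have mv: "view E P w (transcript E P z n) =
         (if w \<in> A then view E P w (transcript E P (\<lambda>_. x0) n) else view E P w (transcript E P (\<lambda>_. y0) n))" for w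
        by (rule mix_view[OF n_def z]) (erule (3) c1, erule (3) c2)
      have lens: "\<forall>w\<in>V. length (z w) = k" using x0 y0 by (simp add: z_def)
      have accx: "accepts E P (\<lambda>_. x0) w" if "w \<in> V" for w
        using sol x0 that by (simp add: solves_def)
      have accy: "accepts E P (\<lambda>_. y0) w" if "w \<in> V" for w
        using sol y0 that by (simp add: solves_def)
      have acc: "accepts E P z w" if "w \<in> V" for w
      proof (cases "w \<in> A")
        case True
        thus ?thesis using accx[OF that] mv[where w=w] by (simp add: accepts_def n_def z_def)
      next
        case False
        thus ?thesis using accy[OF that] mv[where w=w] by (simp add: accepts_def n_def z_def)
      qed
      have "u \<in> V" "v \<in> V" using EV uv by auto
      moreover have "z u \<noteq> z v" using uA vA xy by (simp add: z_def)
      ultimately have ex: "\<exists>u\<in>V. \<exists>v\<in>V. z u \<noteq> z v" by blast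
      have "\<exists>w\<in>V. \<not> accepts E P z w"
      proof -
        have "\<forall>x. (\<forall>v\<in>V. length (x v) = k) \<longrightarrow>
          ((\<forall>u\<in>V. \<forall>v\<in>V. x u = x v) \<longrightarrow> (\<forall>v\<in>V. accepts E P x v)) \<and>
          ((\<exists>u\<in>V. \<exists>v\<in>V. x u \<noteq> x v) \<longrightarrow> (\<exists>v\<in>V. \<not> accepts E P x v))"
          using sol unfolding solves_def by (rule conjunct2)
        from spec[OF this, of z] lens ex show ?thesis by blast
      qed
      thus False using acc by blast
    qed
  qed
  have into: "cut ` {x. length x = k} \<subseteq> L"
  proof
    fix ms assume "ms \<in> cut ` {x. length x = k}"
    then obtain x :: "bool list" where x: "length x = k" "ms = cut x" by blast
    have "length (ms ! t) = ls ! t" if "t < length ls" for t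
    proof -
      have t: "t < length idx" using that by (simp add: ls_def)
      have "idx ! t \<in> set idx" using t by simp
      hence "idx ! t < n" by (simp add: idx_def)
      thus ?thesis using msg_length[OF wf, of "idx ! t" "\<lambda>_. x" E] x t
        by (simp add: cut_def ls_def n_def)
    qed
    thus "ms \<in> L" using x by (simp add: L_def cut_def ls_def)
  qed
  have finL: "finite L" unfolding L_def by (rule card_ge_0_finite) (simp add: card_len_profile)
  have "2 ^ k = card {x :: bool list. length x = k}"
    using card_lists_length_eq[of "UNIV :: bool set" k] by simp
  also have "\<dots> = card (cut ` {x. length x = k})" using inj by (simp add: card_image)
  also have "\<dots> \<le> card L" using into finL by (rule card_mono[rotated])
  also have "\<dots> = 2 ^ sum_list ls" by (simp add: L_def card_len_profile)
  finally have kle: "k \<le> sum_list ls" by simp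
  have "sum_list ls = (\<Sum>i\<in>set idx. snd (sched P ! i))"
    by (simp add: ls_def sum_list_distinct_conv_sum_set idx_def)
  also have "set idx = {i. i < n \<and> fst (sched P ! i) = u} \<union> {i. i < n \<and> fst (sched P ! i) = v}"
    by (auto simp: idx_def)
  also have "(\<Sum>i\<in>\<dots>. snd (sched P ! i)) = bits P u + bits P v"
    using uv_ne by (subst sum.union_disjoint) (auto simp: bits_def n_def)
  finally show ?thesis using kle by simp
qed


lemma leaf_exists:
  assumes fin: "finite V" and EV: "\<And>a c. E a c \<Longrightarrow> a \<in> V \<and> c \<in> V"
  and sym: "\<And>a c. E a c \<Longrightarrow> E c a" and irr: "\<And>a. \<not> E a a"
  and nocyc: "\<And>cs. \<not> is_cycle E cs" and edge: "E a0 c0"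
  shows "\<exists>l p. E l p \<and> (\<forall>q. E l q \<longrightarrow> q = p)"
proof (rule ccontr)
  assume "\<not> ?thesis"
  hence nl: "\<And>l p. E l p \<Longrightarrow> \<exists>q. E l q \<and> q \<noteq> p" by blast
  define path where "path ps \<longleftrightarrow> distinct ps \<and> length ps \<ge> 2 \<and> (\<forall>i. Suc i < length ps \<longrightarrow> E (ps ! i) (ps ! Suc i))" for ps
  have "\<exists>ps. path ps \<and> length ps = m + 2" for m
  proof (induction m)
    case 0
    have "a0 \<noteq> c0" using edge irr by blast
    hence "path [a0, c0]" using edge unfolding path_def by (auto simp: nth_Cons split: nat.splits)
    thus ?case by auto
  next
    case (Suc m)
    then obtain ps where ps: "path ps" "length ps = m + 2" by blast
    define l where "l = last ps"
    define p where "p = ps ! m"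
    have "ps \<noteq> []" using ps(2) by auto
    hence lnth: "l = ps ! Suc m" using ps(2) by (simp add: l_def last_conv_nth)
    have "E p l" using ps unfolding path_def p_def lnth by auto
    hence "E l p" by (rule sym)
    then obtain q where q: "E l q" "q \<noteq> p" using nl by blast
    show ?case
    proof (cases "q \<in> set ps")
      case False
      have "path (ps @ [q])"
        unfolding path_def
      proof (intro conjI allI impI)
        show "distinct (ps @ [q])" using ps(1) False by (simp add: path_def)
        show "2 \<le> length (ps @ [q])" using ps by simp
        fix i assume i: "Suc i < length (ps @ [q])"
        show "E ((ps @ [q]) ! i) ((ps @ [q]) ! Suc i)"
        proof (cases "Suc i < length ps")
          case True
          thus ?thesis using ps(1) by (simp add: path_def nth_append)
        next
          case False
          hence "i = Suc m" using i ps(2) by simp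
          thus ?thesis using q ps(2) lnth by (simp add: nth_append)
        qed
      qed
      thus ?thesis using ps by auto
    next
      case True
      then obtain i where i: "i < length ps" "ps ! i = q" by (auto simp: in_set_conv_nth)
      have "i \<noteq> Suc m" using irr q lnth i by auto
      moreover have "i \<noteq> m" using q i p_def by auto
      ultimately have im: "i < m" using i ps by auto
      have "is_cycle E (drop i ps)"
        unfolding is_cycle_def
      proof (intro conjI allI impI)
        show "3 \<le> length (drop i ps)" using im ps(2) by simp
        show "distinct (drop i ps)" using ps(1) by (simp add: path_def)
        fix j assume j: "Suc j < length (drop i ps)"
        thus "E (drop i ps ! j) (drop i ps ! Suc j)" using ps(1) by (simp add: path_def)
      next
        have "last (drop i ps) = l" using im ps(2) by (simp add: l_def)
        moreover have "hd (drop i ps) = q" using i by (simp add: hd_drop_conv_nth)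
        ultimately show "E (last (drop i ps)) (hd (drop i ps))" using q by simp
      qed
      thus ?thesis using nocyc by blast
    qed
  qed
  then obtain ps where ps: "path ps" "length ps = card V + 2" by blast
  have "set ps \<subseteq> V"
  proof
    fix a assume "a \<in> set ps"
    then obtain i where i: "i < length ps" "ps ! i = a" by (auto simp: in_set_conv_nth)
    show "a \<in> V"
    proof (cases "Suc i < length ps")
      case True
      thus ?thesis using ps(1) i EV unfolding path_def by blast
    next
      case False
      hence "Suc (i - 1) < length ps" "Suc (i - 1) = i" using i ps(2) by auto
      thus ?thesis using ps(1) i EV unfolding path_def by metis
    qed
  qed
  hence "card (set ps) \<le> card V" using fin by (rule card_mono[rotated])
  moreover have "card (set ps) = length ps" using ps(1) by (simp add: path_def distinct_card)
  ultimately show False using ps(2) by simp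
qed

lemma forest_cover:
  assumes "finite V" "\<And>a c. E a c \<Longrightarrow> a \<in> V \<and> c \<in> V" "\<And>a c. E a c \<Longrightarrow> E c a" "\<And>a. \<not> E a a"
    "\<And>cs. \<not> is_cycle E cs" "\<And>a c. E a c \<Longrightarrow> k \<le> b a + b c"
  shows "\<exists>S. vertex_cover V E S \<and> k * card S \<le> (\<Sum>w\<in>V. b w)"
  using assms
proof (induction "card V" arbitrary: V E rule: less_induct)
  case less
  show ?case
  proof (cases "\<exists>a c. E a c")
    case False
    hence "vertex_cover V E {}" by (auto simp: vertex_cover_def)
    thus ?thesis by force
  next
    case True
    then obtain a c where "E a c" by blast
    then obtain l p where lp: "E l p" "\<forall>q. E l q \<longrightarrow> q = p"
      using leaf_exists[OF less.prems(1-5)] by blast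
    have lpV: "l \<in> V" "p \<in> V" "l \<noteq> p" using lp less.prems(2,4) by blast+
    define V' where "V' = V - {l, p}"
    define E' where "E' = (\<lambda>x y. E x y \<and> x \<in> V' \<and> y \<in> V')"
    have lt: "card V' < card V" unfolding V'_def
      using lpV less.prems(1) by (intro psubset_card_mono) auto
    have cyc: "\<not> is_cycle E' cs" for cs
    proof
      assume "is_cycle E' cs"
      hence "is_cycle E cs" by (auto simp: is_cycle_def E'_def)
      thus False using less.prems(5) by blast
    qed
    obtain S' where S': "vertex_cover V' E' S'" "k * card S' \<le> (\<Sum>w\<in>V'. b w)"
      using less.hyps[OF lt, of E'] less.prems cyc
      by (auto simp: E'_def V'_def)
    have finV': "finite V'" using less.prems(1) by (simp add: V'_def)
    have finS': "finite S'" using S'(1) finV' by (auto simp: vertex_cover_def intro: finite_subset)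
    have cov: "vertex_cover V E (insert p S')"
      unfolding vertex_cover_def
    proof (intro conjI allI impI)
      show "insert p S' \<subseteq> V" using S'(1) lpV by (auto simp: vertex_cover_def V'_def)
      fix x y assume xy: "E x y"
      show "x \<in> insert p S' \<or> y \<in> insert p S'"
      proof (cases "x \<in> V' \<and> y \<in> V'")
        case True
        hence "E' x y" using xy by (simp add: E'_def)
        thus ?thesis using S'(1) by (auto simp: vertex_cover_def)
      next
        case False
        hence "x \<in> {l, p} \<or> y \<in> {l, p}" using xy less.prems(2) by (auto simp: V'_def)
        moreover have "x = l \<Longrightarrow> y = p" using xy lp by blast
        moreover have "y = l \<Longrightarrow> x = p" using xy lp less.prems(3) by blast
        ultimately show ?thesis by auto
      qed
    qed
    have "k * card (insert p S') \<le> k * (card S' + 1)"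
      using finS' by (simp add: card_insert_if)
    also have "\<dots> \<le> (\<Sum>w\<in>V'. b w) + k" using S'(2) by simp
    also have "\<dots> \<le> (\<Sum>w\<in>V'. b w) + (b l + b p)" using less.prems(6)[OF lp(1)] by simp
    also have "\<dots> = (\<Sum>w\<in>V. b w)"
    proof -
      have "V = insert l (insert p V')" using lpV by (auto simp: V'_def)
      moreover have "l \<notin> insert p V'" "p \<notin> V'" using lpV by (auto simp: V'_def)
      ultimately show ?thesis using finV' by simp
    qed
    finally show ?thesis using cov by blast
  qed
qed

lemma cost_bits:
  assumes "wf_protocol V k P" "finite V"
  shows "cost P = (\<Sum>w\<in>V. bits P w)"
proof -
  have "cost P = (\<Sum>i\<in>{0..<length (sched P)}. snd (sched P ! i))"
    by (simp add: cost_def sum_list_sum_nth)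
  also have "\<dots> = (\<Sum>w\<in>V. \<Sum>i\<in>{i. i \<in> {0..<length (sched P)} \<and> fst (sched P ! i) = w}. snd (sched P ! i))"
    using assms by (intro sum.group[symmetric]) (auto simp: wf_protocol_def)
  also have "\<dots> = (\<Sum>w\<in>V. bits P w)" by (simp add: bits_def)
  finally show ?thesis .
qed


lemma lower_bound:
  assumes tree: "is_tree V E" and sol: "solves V E k P"
  shows "k * vc V E \<le> cost P"
proof -
  have g: "is_graph V E" and nocyc: "\<And>cs. \<not> is_cycle E cs"
    using tree by (auto simp: is_tree_def connected_graph_def)
  have fin: "finite V" using g by (simp add: is_graph_def)
  have eb: "\<And>a c. E a c \<Longrightarrow> k \<le> bits P a + bits P c" using edge_bound[OF tree _ sol] by blast
  have EV: "\<And>a c. E a c \<Longrightarrow> a \<in> V \<and> c \<in> V" using g by (simp add: is_graph_def)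
  have sym: "\<And>a c. E a c \<Longrightarrow> E c a" using g by (simp add: is_graph_def)
  have irr: "\<And>a. \<not> E a a" using g by (simp add: is_graph_def)
  have "\<exists>S. vertex_cover V E S \<and> k * card S \<le> (\<Sum>w\<in>V. bits P w)"
  proof (rule forest_cover[of V E k "bits P"])
    show "finite V" by (rule fin)
    show "E a c \<Longrightarrow> a \<in> V \<and> c \<in> V" for a c by (rule EV)
    show "E a c \<Longrightarrow> E c a" for a c by (rule sym)
    show "\<not> E a a" for a by (rule irr)
    show "\<not> is_cycle E cs" for cs by (rule nocyc)
    show "E a c \<Longrightarrow> k \<le> bits P a + bits P c" for a c by (rule eb)
  qed
  then obtain S where S: "vertex_cover V E S" "k * card S \<le> (\<Sum>w\<in>V. bits P w)" by blast
  have "vc V E \<le> card S" unfolding vc_def using S(1) by (intro Least_le) blast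
  hence "k * vc V E \<le> k * card S" by simp
  also have "\<dots> \<le> (\<Sum>w\<in>V. bits P w)" by (rule S(2))
  also have "\<dots> = cost P"
  proof -
    have wf: "wf_protocol V k P" using sol by (simp add: solves_def)
    show ?thesis using cost_bits[OF wf fin] by simp
  qed
  finally show ?thesis .
qed

lemma vc_attained:
  assumes "is_graph V E"
  shows "\<exists>S. min_vertex_cover V E S"
proof -
  have "vertex_cover V E V" using assms by (auto simp: vertex_cover_def is_graph_def)
  hence "\<exists>n S. vertex_cover V E S \<and> card S = n" by blast
  hence "\<exists>S. vertex_cover V E S \<and> card S = vc V E" unfolding vc_def by (rule LeastI_ex)
  thus ?thesis by (simp add: min_vertex_cover_def)
qed

lemma opt_eq:
  assumes tree: "is_tree V E"
  shows "opt V E k = vc V E * k"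
proof -
  have g: "is_graph V E" and con: "connected_graph V E"
    using tree by (auto simp: is_tree_def connected_graph_def)
  obtain S0 where S0: "min_vertex_cover V E S0" using vc_attained[OF g] by blast
  have "finite S0" using S0 g by (auto simp: min_vertex_cover_def vertex_cover_def is_graph_def intro: finite_subset)
  then obtain vs where vs: "distinct vs" "set vs = S0" using finite_distinct_list by blast
  have sol: "solves V E k (simple_protocol vs k)"
    using S0 vs by (intro simple_solves[OF con]) (simp add: min_vertex_cover_def)
  have cst: "cost (simple_protocol vs k) = vc V E * k"
    using S0 vs by (simp add: simple_cost min_vertex_cover_def distinct_card[symmetric])
  show ?thesis unfolding opt_def
  proof (rule Least_equality)
    show "\<exists>P. solves V E k P \<and> cost P = vc V E * k" using sol cst by blast
    fix c assume "\<exists>P. solves V E k P \<and> cost P = c"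
    then obtain P where "solves V E k P" "cost P = c" by blast
    thus "vc V E * k \<le> c" using lower_bound[OF tree] by (metis mult.commute)
  qed
qed

theorem theorem3p1:
  fixes V :: "'a set" and E :: "'a \<Rightarrow> 'a \<Rightarrow> bool"
  assumes "is_tree V E"
  shows "((\<lambda>k. real (opt V E k) / real k) \<longlonglongrightarrow> real (vc V E)) \<and>
    (\<forall>S vs k. min_vertex_cover V E S \<and> distinct vs \<and> set vs = S \<and> k > 0 \<longrightarrow>
           solves V E k (simple_protocol vs k) \<and> cost (simple_protocol vs k) = card S * k
           \<and> (\<lambda>k. real (opt V E k) / real k) \<longlonglongrightarrow> real (card S))"
proof -
  have con: "connected_graph V E" using assms by (simp add: is_tree_def)
  have lim: "(\<lambda>k. real (opt V E k) / real k) \<longlonglongrightarrow> real (vc V E)"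
  proof (rule Lim_transform_eventually[OF tendsto_const])
    show "\<forall>\<^sub>F k in sequentially. real (vc V E) = real (opt V E k) / real k"
    proof (rule eventually_mono[OF eventually_gt_at_top[of "0::nat"]])
      fix k :: nat assume "0 < k"
      thus "real (vc V E) = real (opt V E k) / real k"
        by (simp add: opt_eq[OF assms])
    qed
  qed
  show ?thesis
  proof (intro conjI allI impI lim)
    fix S vs k assume h: "min_vertex_cover V E S \<and> distinct vs \<and> set vs = S \<and> 0 < (k::nat)"
    show "solves V E k (simple_protocol vs k)"
      using h by (intro simple_solves[OF con]) (simp add: min_vertex_cover_def)
    show "cost (simple_protocol vs k) = card S * k"
      using h by (simp add: simple_cost distinct_card[symmetric])
    show "(\<lambda>k. real (opt V E k) / real k) \<longlonglongrightarrow> real (card S)"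
      using lim h by (simp add: min_vertex_cover_def)
  qed
qed

end
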